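(* Let $G=(V,E)$ with weight $\mu$ be an infinite, connected, locally finite weighted graph satisfying condition $(p_0)$, and let $m>1$. Let $(p,q)\in G_6=\{(p,q): p<m-1-q,\ q<m-1\}\cup\{(m-1,0)\}$. Then the inequality $\Delta_m u+u^p|\nabla u|^q\le 0$ on $V$ admits no nontrivial positive solution (no volume growth assumption is imposed).
   Context: Setting: $G=(V,E)$ is an infinite, connected, locally finite graph with no loops and no multiple edges; $x\sim y$ means $x$ and $y$ are joined by an edge. A weight is a symmetric function $\mu:V\times V\to[0,\infty)$ with $\mu_{xy}=\mu_{yx}>0$ if and only if $x\sim y$; the vertex measure is $\mu(x)=\sum_{y\sim x}\mu_{xy}$. For $m>1$ and $u:V\to\mathbb R$, $\Delta_m u(x)=\frac{1}{\mu(x)}\sum_{y\sim x}\mu_{xy}|u(y)-u(x)|^{m-2}(u(y)-u(x))$ and $|\nabla u(x)|=\big(\sum_{y\sim x}\frac{\mu_{xy}}{2\mu(x)}(u(y)-u(x))^2\big)^{1/2}$. Condition $(p_0)$: there is a constant $p_0>1$ such that $\mu_{xy}/\mu(x)\ge 1/p_0$ for all $x\sim y$. A nontrivial positive solution of $\Delta_m u+u^p|\nabla u|^q\le 0$ is a non-constant function $u:V\to(0,\infty)$ such that $\Delta_m u(x)+u(x)^p|\nabla u(x)|^q\le 0$ for every $x\in V$, with the conventions $0^0=1$, $0^q=0$ for $q>0$, and, for $q<0$, $|\nabla u(x)|^q=+\infty$ when $|\nabla u(x)|=0$ (so the inequality fails at such $x$). *)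

theory Defs
  imports Complex_Main
begin

text \<open>A weighted graph on the vertex type 'a (vertex set = UNIV):
  adjacency relation E, weight mu.\<close>

definition weighted_graph :: "('a \<Rightarrow> 'a \<Rightarrow> bool) \<Rightarrow> ('a \<Rightarrow> 'a \<Rightarrow> real) \<Rightarrow> bool" where
  "weighted_graph E mu \<longleftrightarrow>
     infinite (UNIV :: 'a set)
   \<and> (\<forall>x. \<not> E x x)
   \<and> (\<forall>x y. E x y \<longleftrightarrow> E y x)
   \<and> (\<forall>x. finite {y. E x y})
   \<and> (\<forall>x y. E\<^sup>*\<^sup>* x y)
   \<and> (\<forall>x y. mu x y = mu y x)
   \<and> (\<forall>x y. mu x y \<ge> 0)
   \<and> (\<forall>x y. mu x y > 0 \<longleftrightarrow> E x y)"

definition vmeasure :: "('a \<Rightarrow> 'a \<Rightarrow> bool) \<Rightarrow> ('a \<Rightarrow> 'a \<Rightarrow> real) \<Rightarrow> 'a \<Rightarrow> real" where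
  "vmeasure E mu x = (\<Sum>y\<in>{y. E x y}. mu x y)"

definition cond_p0 :: "('a \<Rightarrow> 'a \<Rightarrow> bool) \<Rightarrow> ('a \<Rightarrow> 'a \<Rightarrow> real) \<Rightarrow> bool" where
  "cond_p0 E mu \<longleftrightarrow> (\<exists>p0::real. p0 > 1 \<and>
     (\<forall>x y. E x y \<longrightarrow> mu x y / vmeasure E mu x \<ge> 1 / p0))"

definition m_laplacian :: "('a \<Rightarrow> 'a \<Rightarrow> bool) \<Rightarrow> ('a \<Rightarrow> 'a \<Rightarrow> real) \<Rightarrow> real \<Rightarrow> ('a \<Rightarrow> real) \<Rightarrow> 'a \<Rightarrow> real" where
  "m_laplacian E mu m u x = (1 / vmeasure E mu x) *
     (\<Sum>y\<in>{y. E x y}. mu x y * \<bar>u y - u x\<bar> powr (m - 2) * (u y - u x))"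

definition grad_norm :: "('a \<Rightarrow> 'a \<Rightarrow> bool) \<Rightarrow> ('a \<Rightarrow> 'a \<Rightarrow> real) \<Rightarrow> ('a \<Rightarrow> real) \<Rightarrow> 'a \<Rightarrow> real" where
  "grad_norm E mu u x = sqrt (\<Sum>y\<in>{y. E x y}. mu x y / (2 * vmeasure E mu x) * (u y - u x)^2)"

text \<open>Power of the gradient with the conventions 0^0 = 1, 0^q = 0 for q > 0
  (for q < 0 and zero gradient the inequality is required to fail; see below).\<close>
definition gpow :: "real \<Rightarrow> real \<Rightarrow> real" where
  "gpow g q = (if g = 0 then (if q = 0 then 1 else 0) else g powr q)"

definition nontrivial_pos_solution ::
  "('a \<Rightarrow> 'a \<Rightarrow> bool) \<Rightarrow> ('a \<Rightarrow> 'a \<Rightarrow> real) \<Rightarrow> real \<Rightarrow> real \<Rightarrow> real \<Rightarrow> ('a \<Rightarrow> real) \<Rightarrow> bool" where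
  "nontrivial_pos_solution E mu m p q u \<longleftrightarrow>
     (\<forall>x. u x > 0)
   \<and> (\<exists>x y. u x \<noteq> u y)
   \<and> (\<forall>x. (q < 0 \<longrightarrow> grad_norm E mu u x \<noteq> 0)
        \<and> m_laplacian E mu m u x + u x powr p * gpow (grad_norm E mu u x) q \<le> 0)"

definition G6 :: "real \<Rightarrow> (real \<times> real) set" where
  "G6 m = {(p, q). p < m - 1 - q \<and> q < m - 1} \<union> {(m - 1, 0)}"

end

theory Submission imports Defs "HOL-Analysis.Convex"
begin

lemma tangent_powr:
  fixes a b s :: real
  assumes "0 < s" "s \<le> 1" "a > 0" "b > 0"
  shows "b powr s \<le> a powr s + s * a powr (s - 1) * (b - a)"
proof -
  have Y: "a powr (1 - s) * b powr s \<le> (1 - s) * a + s * b"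
    using Youngs_inequality_0[of "1 - s" s a b] assms by simp
  have pa: "a powr (1 - s) > 0" using assms by simp
  have "b powr s = (a powr (1 - s) * b powr s) / a powr (1 - s)" using pa by simp
  also have "\<dots> \<le> ((1 - s) * a + s * b) / a powr (1 - s)"
    by (rule divide_right_mono[OF Y]) (use pa in auto)
  also have "\<dots> = a powr s + s * a powr (s - 1) * (b - a)"
  proof -
    have e1: "a / a powr (1 - s) = a powr s"
      using assms by (simp add: powr_diff)
    have e2: "1 / a powr (1 - s) = a powr (s - 1)"
      using assms by (simp add: powr_minus_divide[symmetric] powr_minus)
    have "((1 - s) * a + s * b) / a powr (1 - s) = (1 - s) * (a / a powr (1 - s)) + s * b * (1 / a powr (1 - s))"
      by (simp add: add_divide_distrib diff_divide_distrib algebra_simps)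
    also have "\<dots> = (1 - s) * a powr s + s * b * a powr (s - 1)" by (simp add: e1 e2)
    also have "\<dots> = a powr s + s * a powr (s - 1) * (b - a)"
    proof -
      have e3: "a powr s = a * a powr (s - 1)" using assms by (simp add: powr_mult_base)
      show ?thesis by (subst (1 2) e3) (simp add: algebra_simps)
    qed
    finally show ?thesis .
  qed
  finally show ?thesis .
qed

lemma no_descent:
  fixes W :: "'a \<Rightarrow> real"
  assumes "x0 \<in> S" "\<And>x. x \<in> S \<Longrightarrow> W x \<ge> 0" "d > 0"
    and step: "\<And>x. x \<in> S \<Longrightarrow> \<exists>y\<in>S. W y \<le> W x - d"
  shows False
proof -
  have P: "\<exists>x\<in>S. W x \<le> W x0 - real n * d" for n
  proof (induction n)
    case 0 then show ?case using assms(1) by auto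
  next
    case (Suc n)
    then obtain x where "x \<in> S" "W x \<le> W x0 - real n * d" by auto
    then obtain y where "y \<in> S" "W y \<le> W x - d" using step by blast
    then show ?case using \<open>W x \<le> _\<close> by (intro bexI[of _ y]) (auto simp: algebra_simps)
  qed
  obtain n where n: "W x0 / d < real n" using reals_Archimedean2 by blast
  then have "W x0 < real n * d" using assms(3) by (simp add: field_simps)
  with P[of n] assms(2) show False by force
qed

lemma nonflat_exists:
  assumes "E\<^sup>*\<^sup>* a b" "(u::'a \<Rightarrow> real) a \<noteq> u b"
  shows "\<exists>x y. E x y \<and> u x \<noteq> u y"
  using assms
proof (induction rule: rtranclp_induct)
  case base then show ?case by simp
next
  case (step y z)
  then show ?case by (cases "u a = u y") auto
qed


definition phi :: "real \<Rightarrow> real \<Rightarrow> real" where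
  "phi m t = \<bar>t\<bar> powr (m - 2) * t"

lemma powr_m1: "(t::real) > 0 \<Longrightarrow> t powr (m - 2) * t = t powr (m - 1)"
proof -
  assume t: "t > 0"
  have "t powr (m - 1) = t powr ((m - 2) + (1::real))" by simp
  also have "\<dots> = t powr (m - 2) * t" using t by (simp only: powr_add powr_one_gt_zero_iff) simp
  finally show ?thesis by simp
qed

lemma phi_pos: "t > 0 \<Longrightarrow> phi m t = t powr (m - 1)"
  unfolding phi_def using powr_m1[of t m] by simp

lemma phi_neg: "t < 0 \<Longrightarrow> phi m t = - ((- t) powr (m - 1))"
proof -
  assume t: "t < 0"
  have "phi m t = - ((-t) powr (m - 2) * (-t))" unfolding phi_def using t by simp
  also have "(-t) powr (m - 2) * (-t) = (-t) powr (m - 1)"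
    using t powr_m1[of "-t" m] by simp
  finally show ?thesis .
qed

lemma phi_zero: "phi m 0 = 0" unfolding phi_def by simp

lemma phi_mono:
  assumes "m > 1" "s \<le> t" shows "phi m s \<le> phi m t"
proof -
  consider "s < 0" "t < 0" | "s \<le> 0" "t \<ge> 0" | "s > 0" "t > 0" using assms by linarith
  then show ?thesis
  proof cases
    case 1 then show ?thesis using assms by (simp add: phi_neg powr_mono2)
  next
    case 2
    have a: "phi m s \<le> 0" using 2 by (cases "s = 0") (simp_all add: phi_neg phi_zero)
    have b: "phi m t \<ge> 0" using 2 by (cases "t = 0") (simp_all add: phi_pos phi_zero)
    show ?thesis using a b by simp
  next
    case 3 then show ?thesis using assms by (simp add: phi_pos powr_mono2)
  qed
qed

definition Cst :: "real \<Rightarrow> real \<Rightarrow> real \<Rightarrow> real" where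
  "Cst p0 m q = min ((1 / sqrt (2 * p0)) powr q) ((p0 powr (1 / (m - 1)) / sqrt 2) powr q)"

lemma Cst_pos: "p0 > 1 \<Longrightarrow> Cst p0 m q > 0"
  unfolding Cst_def by simp

lemma Cst_0: "p0 > 1 \<Longrightarrow> Cst p0 m 0 = 1"
  unfolding Cst_def by simp

lemma local_step:
  fixes E :: "'a \<Rightarrow> 'a \<Rightarrow> bool" and mu :: "'a \<Rightarrow> 'a \<Rightarrow> real" and u :: "'a \<Rightarrow> real"
  assumes wg: "weighted_graph E mu" and p0: "p0 > 1"
    and hp0: "\<forall>x y. E x y \<longrightarrow> mu x y / vmeasure E mu x \<ge> 1 / p0"
    and m: "m > 1"
    and upos: "\<forall>x. u x > 0"
    and ineq: "m_laplacian E mu m u x + u x powr p * gpow (grad_norm E mu u x) q \<le> 0"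
    and y0: "E x y0" "u y0 \<noteq> u x"
  shows "\<exists>y. E x y \<and> u y < u x \<and>
           (u x - u y) powr (m - 1) \<ge> u x powr p * Cst p0 m q * (u x - u y) powr q"
proof -
  define N where "N = {y. E x y}"
  define M where "M = vmeasure E mu x"
  define w where "w y = mu x y / M" for y
  define d where "d y = u y - u x" for y
  have finN: "finite N" using wg unfolding weighted_graph_def N_def by auto
  have y0N: "y0 \<in> N" using y0 N_def by simp
  have mu_nn: "mu a c \<ge> 0" for a c using wg unfolding weighted_graph_def by auto
  have mu_pos: "E a c \<Longrightarrow> mu a c > 0" for a c using wg unfolding weighted_graph_def by auto
  have Mpos: "M > 0"
  proof -
    have "mu x y0 \<le> (\<Sum>y\<in>N. mu x y)"
      by (rule member_le_sum) (use y0N finN mu_nn in auto)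
    then show ?thesis using mu_pos[OF y0(1)] unfolding M_def vmeasure_def N_def by simp
  qed
  have w_nn: "w y \<ge> 0" for y using mu_nn Mpos unfolding w_def by simp
  have w_low: "y \<in> N \<Longrightarrow> w y \<ge> 1 / p0" for y using hp0 unfolding w_def M_def N_def by auto
  have w_sum: "(\<Sum>y\<in>N. w y) = 1"
    unfolding w_def using Mpos by (simp add: sum_divide_distrib[symmetric] M_def vmeasure_def N_def)
  define D where "D = m_laplacian E mu m u x"
  have D_eq: "D = (\<Sum>y\<in>N. w y * phi m (d y))"
    unfolding D_def m_laplacian_def w_def phi_def d_def N_def M_def
    by (simp add: sum_distrib_left mult.assoc)
  define g where "g = grad_norm E mu u x"
  have g_eq: "g = sqrt (\<Sum>y\<in>N. w y / 2 * (d y)^2)"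
    unfolding g_def grad_norm_def w_def d_def N_def M_def by (simp add: ac_simps)
  have gpow_nn: "gpow g q \<ge> 0" unfolding gpow_def by simp
  have rhs_nn: "u x powr p * gpow g q \<ge> 0" using gpow_nn by simp
  have Dle: "D \<le> - (u x powr p * gpow g q)" using ineq unfolding D_def g_def by simp
  obtain ym where ymN: "ym \<in> N" and ymmin: "\<And>y. y \<in> N \<Longrightarrow> u ym \<le> u y"
  proof -
    have ne: "u ` N \<noteq> {}" using y0N by auto
    have fi: "finite (u ` N)" using finN by simp
    obtain ym where "ym \<in> N" "u ym = Min (u ` N)" using Min_in[OF fi ne] by auto
    moreover have "\<And>y. y \<in> N \<Longrightarrow> Min (u ` N) \<le> u y" using fi by simp
    ultimately show ?thesis using that by metis
  qed
  define b where "b = u x - u ym"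
  have bpos: "b > 0"
  proof (rule ccontr)
    assume "\<not> b > 0"
    then have dnn: "y \<in> N \<Longrightarrow> d y \<ge> 0" for y using ymmin[of y] unfolding b_def d_def by simp
    have d0: "d y0 > 0" using dnn[OF y0N] y0(2) unfolding d_def by simp
    have tnn: "y \<in> N \<Longrightarrow> w y * phi m (d y) \<ge> 0" for y
      using phi_mono[OF m dnn[of y]] w_nn[of y] by (simp add: phi_zero)
    have "w y0 * phi m (d y0) \<le> D" unfolding D_eq
      by (rule member_le_sum) (use y0N finN tnn in auto)
    moreover have "w y0 * phi m (d y0) > 0"
    proof -
      have "w y0 > 0" using w_low[OF y0N] p0 by (smt (verit) divide_pos_pos)
      then show ?thesis using d0 by (simp add: phi_pos)
    qed
    ultimately show False using Dle rhs_nn by simp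
  qed
  define B where "B = b powr (m - 1)"
  have phib: "phi m (- b) = - B" unfolding B_def using bpos by (simp add: phi_neg)
  have dge: "y \<in> N \<Longrightarrow> d y \<ge> - b" for y using ymmin[of y] unfolding b_def d_def by simp
  have tge: "y \<in> N \<Longrightarrow> w y * (phi m (d y) + B) \<ge> 0" for y
    using phi_mono[OF m dge[of y]] phib w_nn[of y] by simp
  have D_eq2: "D = (\<Sum>y\<in>N. w y * (phi m (d y) + B)) - B"
    unfolding D_eq by (simp add: algebra_simps sum.distrib sum_distrib_left[symmetric] w_sum)
  have DgeB: "D \<ge> - B" using D_eq2 tge sum_nonneg[of N "\<lambda>y. w y * (phi m (d y) + B)"] by simp
  define K where "K = p0 powr (1 / (m - 1))"
  have K1: "K \<ge> 1" unfolding K_def using p0 m by (intro ge_one_powr_ge_zero) auto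
  have dup: "y \<in> N \<Longrightarrow> (d y)^2 \<le> (K * b)^2" for y
  proof -
    assume yN: "y \<in> N"
    show ?thesis
    proof (cases "d y > 0")
      case True
      have "w y * (phi m (d y) + B) \<le> (\<Sum>y\<in>N. w y * (phi m (d y) + B))"
        by (rule member_le_sum) (use yN finN tge in auto)
      then have "w y * (phi m (d y) + B) \<le> D + B" using D_eq2 by simp
      also have "\<dots> \<le> B" using Dle rhs_nn by simp
      finally have "w y * phi m (d y) \<le> (1 - w y) * B" by (simp add: algebra_simps)
      also have "\<dots> \<le> B" using w_nn[of y] bpos unfolding B_def by (simp add: algebra_simps)
      finally have "w y * (d y) powr (m - 1) \<le> B" using True by (simp add: phi_pos)
      moreover have "(1 / p0) * (d y) powr (m - 1) \<le> w y * (d y) powr (m - 1)"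
        using mult_right_mono[OF w_low[OF yN], of "(d y) powr (m - 1)"] by simp
      ultimately have "(1 / p0) * (d y) powr (m - 1) \<le> B" by linarith
      then have "(d y) powr (m - 1) \<le> p0 * B" using p0 by (simp add: field_simps)
      then have "((d y) powr (m - 1)) powr (1 / (m - 1)) \<le> (p0 * B) powr (1 / (m - 1))"
        using m True by (simp add: powr_mono2)
      then have "d y \<le> K * b"
        using m True bpos p0 unfolding K_def B_def by (simp add: powr_powr powr_mult)
      then show ?thesis using True by (simp add: power_mono)
    next
      case False
      then have "\<bar>d y\<bar> \<le> K * b" using dge[OF yN] K1 bpos
        by (smt (verit) mult_le_cancel_right1)
      then show ?thesis by (metis abs_le_square_iff abs_of_nonneg K1 bpos mult_nonneg_nonneg less_le order_trans zero_le_one abs_ge_zero)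
    qed
  qed
  define G where "G = (\<Sum>y\<in>N. w y / 2 * (d y)^2)"
  have Gup: "G \<le> (K * b)^2 / 2"
  proof -
    have "G \<le> (\<Sum>y\<in>N. w y / 2 * (K * b)^2)" unfolding G_def
      by (rule sum_mono) (use dup w_nn in \<open>simp add: mult_left_mono\<close>)
    also have "\<dots> = (\<Sum>y\<in>N. w y) * ((K * b)^2 / 2)" by (subst sum_distrib_right) simp
    also have "\<dots> = (K * b)^2 / 2" using w_sum by simp
    finally show ?thesis .
  qed
  have Glow: "G \<ge> b^2 / (2 * p0)"
  proof -
    have tn: "y \<in> N \<Longrightarrow> w y / 2 * (d y)^2 \<ge> 0" for y using w_nn[of y] by simp
    have "w ym / 2 * (d ym)^2 \<le> G" unfolding G_def
      by (rule member_le_sum) (use ymN finN tn in auto)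
    moreover have "(d ym)^2 = b^2" unfolding d_def b_def by (simp add: power2_commute)
    moreover have "b^2 / (2 * p0) \<le> w ym / 2 * b^2"
    proof -
      have "1 * b^2 \<le> (p0 * w ym) * b^2"
        using w_low[OF ymN] p0 by (intro mult_right_mono) (simp_all add: field_simps)
      then show ?thesis using p0 by (simp add: field_simps)
    qed
    ultimately show ?thesis by simp
  qed
  have g_low: "g \<ge> b / sqrt (2 * p0)"
  proof -
    have "sqrt (b^2 / (2 * p0)) \<le> sqrt G" using Glow by simp
    then show ?thesis using g_eq G_def bpos p0 by (simp add: real_sqrt_divide)
  qed
  have g_up: "g \<le> K * b / sqrt 2"
  proof -
    have "sqrt G \<le> sqrt ((K * b)^2 / 2)" using Gup by simp
    then show ?thesis using g_eq G_def bpos K1 by (simp add: real_sqrt_divide)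
  qed
  have gpos: "g > 0" using g_low bpos p0 by (smt (verit) divide_pos_pos real_sqrt_gt_zero)
  have gpow_ge: "gpow g q \<ge> Cst p0 m q * b powr q"
  proof (cases "q \<ge> 0")
    case True
    have "(b / sqrt (2 * p0)) powr q \<le> g powr q"
      using g_low True bpos p0 by (simp add: powr_mono2)
    moreover have "(b / sqrt (2 * p0)) powr q = (1 / sqrt (2 * p0)) powr q * b powr q"
      using bpos p0 by (simp add: powr_divide)
    moreover have "Cst p0 m q \<le> (1 / sqrt (2 * p0)) powr q" unfolding Cst_def by simp
    ultimately show ?thesis using gpos unfolding gpow_def
      by (smt (verit) mult_right_mono powr_ge_zero)
  next
    case False
    have "(K * b / sqrt 2) powr q \<le> g powr q"
      using g_up False gpos by (simp add: powr_mono2')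
    moreover have "(K * b / sqrt 2) powr q = (K / sqrt 2) powr q * b powr q"
      using bpos K1 by (simp add: powr_divide powr_mult)
    moreover have "Cst p0 m q \<le> (K / sqrt 2) powr q" unfolding Cst_def K_def by simp
    ultimately show ?thesis using gpos unfolding gpow_def
      by (smt (verit) mult_right_mono powr_ge_zero)
  qed
  have "u x powr p * (Cst p0 m q * b powr q) \<le> u x powr p * gpow g q"
    using gpow_ge by (simp add: mult_left_mono)
  also have "\<dots> \<le> B" using Dle DgeB by simp
  finally have "B \<ge> u x powr p * Cst p0 m q * b powr q" by (simp add: mult.assoc)
  then show ?thesis
    using ymN bpos unfolding B_def b_def N_def by (intro exI[of _ ym]) auto
qed


theorem mainTheorem7:
  fixes E :: "'a \<Rightarrow> 'a \<Rightarrow> bool" and mu :: "'a \<Rightarrow> 'a \<Rightarrow> real"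
    and m p q :: real
  assumes "weighted_graph E mu"
    and "cond_p0 E mu"
    and "m > 1"
    and "(p, q) \<in> G6 m"
  shows "\<not> (\<exists>u. nontrivial_pos_solution E mu m p q u)"
proof
  assume "\<exists>u. nontrivial_pos_solution E mu m p q u"
  then obtain u where sol: "nontrivial_pos_solution E mu m p q u" by blast
  have wg: "weighted_graph E mu" and m: "m > 1" using assms by auto
  obtain p0 where p0: "p0 > 1" and hp0: "\<forall>x y. E x y \<longrightarrow> mu x y / vmeasure E mu x \<ge> 1 / p0"
    using assms(2) unfolding cond_p0_def by blast
  have upos: "\<forall>x. u x > 0" using sol unfolding nontrivial_pos_solution_def by blast
  have ineq: "\<And>x. m_laplacian E mu m u x + u x powr p * gpow (grad_norm E mu u x) q \<le> 0"
    using sol unfolding nontrivial_pos_solution_def by blast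
  obtain a b where "u a \<noteq> u b" using sol unfolding nontrivial_pos_solution_def by blast
  moreover have "E\<^sup>*\<^sup>* a b" using wg unfolding weighted_graph_def by blast
  ultimately obtain x1 y1 where "E x1 y1" "u x1 \<noteq> u y1" using nonflat_exists by metis
  have Esym: "\<And>x y. E x y \<Longrightarrow> E y x" using wg unfolding weighted_graph_def by blast
  define NF where "NF = {x. \<exists>y. E x y \<and> u y \<noteq> u x}"
  have x0: "x1 \<in> NF" unfolding NF_def using \<open>E x1 y1\<close> \<open>u x1 \<noteq> u y1\<close> by auto
  define C where "C = Cst p0 m q"
  have Cpos: "C > 0" unfolding C_def using Cst_pos[OF p0] .
  have step: "\<exists>y\<in>NF. u y < u x \<and> (u x - u y) powr (m - 1) \<ge> u x powr p * C * (u x - u y) powr q"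
    if xNF: "x \<in> NF" for x
  proof -
    obtain y0 where "E x y0" "u y0 \<noteq> u x" using xNF unfolding NF_def by blast
    from local_step[OF wg p0 hp0 m upos ineq this]
    obtain y where y: "E x y" "u y < u x"
      "(u x - u y) powr (m - 1) \<ge> u x powr p * C * (u x - u y) powr q"
      unfolding C_def by blast
    have "y \<in> NF" unfolding NF_def using Esym[OF y(1)] y(2) by force
    then show ?thesis using y by blast
  qed
  consider "p = m - 1" "q = 0" | "p < m - 1 - q" "q < m - 1"
    using assms(4) unfolding G6_def by auto
  then show False
  proof cases
    case 1
    then have C1: "C = 1" unfolding C_def using Cst_0[OF p0] by simp
    obtain y where y: "u y < u x1" "(u x1 - u y) powr (m - 1) \<ge> u x1 powr (m - 1)"
      using step[OF x0] 1 C1 by auto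
    have "u x1 \<le> u x1 - u y"
    proof (rule ccontr)
      assume "\<not> ?thesis"
      then have "(u x1 - u y) powr (m - 1) < u x1 powr (m - 1)"
        using y(1) m by (intro powr_less_mono2) auto
      then show False using y(2) by simp
    qed
    moreover have "u y > 0" using upos by blast
    ultimately show False by simp
  next
    case 2
    define s where "s = m - 1 - q"
    have spos: "s > 0" using 2 unfolding s_def by simp
    define c where "c = C powr (1 / s)"
    define r where "r = p / s"
    have cpos: "c > 0" unfolding c_def using Cpos by simp
    have r1: "r < 1" unfolding r_def using 2 spos unfolding s_def by (simp add: field_simps)
    have step2: "\<exists>y\<in>NF. u y \<le> u x - c * u x powr r" if xNF: "x \<in> NF" for x
    proof -
      obtain y where yN: "y \<in> NF" and y: "u y < u x"
        "(u x - u y) powr (m - 1) \<ge> u x powr p * C * (u x - u y) powr q"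
        using step[OF xNF] by blast
      define bb where "bb = u x - u y"
      have bpos: "bb > 0" using y unfolding bb_def by simp
      have "bb powr (m - 1) = bb powr s * bb powr q"
        unfolding s_def using bpos by (simp add: powr_add[symmetric])
      then have "bb powr s * bb powr q \<ge> (u x powr p * C) * bb powr q" using y(2) unfolding bb_def by simp
      then have "bb powr s \<ge> u x powr p * C" using bpos by simp
      then have "(bb powr s) powr (1 / s) \<ge> (u x powr p * C) powr (1 / s)"
        using spos Cpos by (intro powr_mono2) auto
      moreover have "(bb powr s) powr (1 / s) = bb" using spos bpos by (simp add: powr_powr)
      moreover have "(u x powr p * C) powr (1 / s) = c * u x powr r"
        unfolding c_def r_def using Cpos upos spos by (simp add: powr_mult powr_powr)
      ultimately have "bb \<ge> c * u x powr r" by simp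
      then show ?thesis using yN unfolding bb_def by force
    qed
    show False
    proof (cases "r \<le> 0")
      case True
      define S where "S = NF \<inter> {x. u x \<le> u x1}"
      show False
      proof (rule no_descent[of x1 S u "c * u x1 powr r"])
        show "x1 \<in> S" unfolding S_def using x0 by simp
        show "\<And>x. x \<in> S \<Longrightarrow> 0 \<le> u x" using upos less_imp_le by blast
        show "0 < c * u x1 powr r" using cpos upos[rule_format, of x1] by simp
        fix x assume xS: "x \<in> S"
        then obtain y where yN: "y \<in> NF" and y: "u y \<le> u x - c * u x powr r"
          using step2 unfolding S_def by blast
        have "u x1 powr r \<le> u x powr r"
          using True xS upos unfolding S_def by (intro powr_mono2') auto
        then have "c * u x1 powr r \<le> c * u x powr r" using cpos by simp
        moreover have "c * u x powr r > 0" using cpos upos[rule_format, of x] by simp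
        ultimately show "\<exists>y\<in>S. u y \<le> u x - c * u x1 powr r"
          using yN y xS unfolding S_def by (intro bexI[of _ y]) auto
      qed
    next
      case False
      define t where "t = 1 - r"
      have t01: "0 < t" "t \<le> 1" using r1 False unfolding t_def by auto
      show False
      proof (rule no_descent[of x1 NF "\<lambda>x. u x powr t" "t * c"])
        show "x1 \<in> NF" using x0 .
        show "\<And>x. x \<in> NF \<Longrightarrow> 0 \<le> u x powr t" by simp
        show "0 < t * c" using t01 cpos by simp
        fix x assume xN: "x \<in> NF"
        then obtain y where yN: "y \<in> NF" and y: "u y \<le> u x - c * u x powr r"
          using step2 by blast
        have e1: "u x powr (t - 1) * u x powr r = 1"
          unfolding t_def using upos[rule_format, of x] by (simp add: powr_add[symmetric])
        have e2: "t * u x powr (t - 1) * (- c * u x powr r) = - (t * c)"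
          using e1 by (simp add: algebra_simps)
        have "u y powr t \<le> u x powr t + t * u x powr (t - 1) * (u y - u x)"
          using tangent_powr[OF t01] upos by blast
        also have "t * u x powr (t - 1) * (u y - u x) \<le> t * u x powr (t - 1) * (- c * u x powr r)"
          using y t01 by (intro mult_left_mono) auto
        also have "\<dots> = - (t * c)" by (rule e2)
        finally show "\<exists>y\<in>NF. u y powr t \<le> u x powr t - t * c"
          using yN by (intro bexI[of _ y]) auto
      qed
    qed
  qed
qed

end
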